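(* Let $h$ be a linear functional and $\lambda\in\mathbb R$ such that $\operatorname{conv}(\frac12(d+\mathcal W))$ lies in the open half-space $\{\bar x:h(\bar x)<\lambda\}$. Then there is at most one element of $\mathcal C$ in $\{\bar x:h(\bar x)>\lambda\}$, and such an element is a null vertex of $\operatorname{conv}(\mathcal C)$. Consequently any element of $\mathcal C$ outside $\operatorname{conv}(\frac12(d+\mathcal W))$ is a null vertex of $\operatorname{conv}(\mathcal C)$.
   Context: Setting: $G$ compact Lie group, $K\subset G$ closed, $G/K$ connected almost effective, isotropy representation $\mathfrak p=\mathfrak p_1\oplus\cdots\oplus\mathfrak p_r$ ($r\ge2$) with pairwise inequivalent $\mathbb R$-irreducible summands, $d_i=\dim\mathfrak p_i$, $d=(d_1,\dots,d_r)$, $n=\sum d_i$. The scalar curvature of the metric $e^{q_i}Q$ on $\mathfrak p_i$ is $S(q)=\sum_{w\in\mathcal W}A_we^{w\cdot q}$, $\mathcal W\subset\mathbb Z^r$ finite, $A_w\ne0$, each $w$ of type I (one entry $-1$), type II (one entry $1$, two entries $-1$) or type III (one entry $1$, one entry $-2$), other entries $0$; $A_w>0$ for type I and $<0$ otherwise. Assume $\dim\operatorname{conv}(\mathcal W)=r-1$. $J$ is the symmetric bilinear form on $\mathbb R^r$ with $J(p,p)=\frac1{n-1}(\sum p_i)^2-\sum p_i^2/d_i$; a vector $\bar x$ is null if $J(\bar x,\bar x)=0$. $u=\sum_{\bar c\in\mathcal C}F_{\bar c}e^{\bar c\cdot q}$ ($\mathcal C$ finite, $F_{\bar c}\ne0$)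 is a superpotential: for every $\xi$, $\sum_{(\bar a,\bar c)\in\mathcal C^2,\ \bar a+\bar c=\xi}J(\bar a,\bar c)F_{\bar a}F_{\bar c}$ equals $A_w$ if $\xi=d+w$, $w\in\mathcal W$, and $0$ otherwise. Normalise (by subtracting a constant from $u$) so that $\mathcal C$ lies in the hyperplane $\mathcal H=\{\bar x:\sum\bar x_i=\frac12(n-1)\}$, which also contains $\frac12(d+\mathcal W)$. *)

theory Defs
  imports "HOL-Analysis.Analysis"
begin

text \<open>Vectors in R^r are modelled as real^'r, with 'r a finite index type of size r.\<close>

definition dvec :: "('r::finite \<Rightarrow> nat) \<Rightarrow> real^'r" where
  "dvec d = (\<chi> i. real (d i))"

definition ndim :: "('r::finite \<Rightarrow> nat) \<Rightarrow> nat" where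
  "ndim d = (\<Sum>i\<in>UNIV. d i)"

definition Jform :: "('r::finite \<Rightarrow> nat) \<Rightarrow> real^'r \<Rightarrow> real^'r \<Rightarrow> real" where
  "Jform d p q = (\<Sum>i\<in>UNIV. p$i) * (\<Sum>i\<in>UNIV. q$i) / (real (ndim d) - 1)
                 - (\<Sum>i\<in>UNIV. p$i * q$i / real (d i))"

definition is_null :: "('r::finite \<Rightarrow> nat) \<Rightarrow> real^'r \<Rightarrow> bool" where
  "is_null d x \<longleftrightarrow> Jform d x x = 0"

definition typeI :: "real^'r::finite \<Rightarrow> bool" where
  "typeI w \<longleftrightarrow> (\<exists>i. w$i = -1 \<and> (\<forall>j. j \<noteq> i \<longrightarrow> w$j = 0))"

definition typeII :: "real^'r::finite \<Rightarrow> bool" where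
  "typeII w \<longleftrightarrow> (\<exists>i j k. i \<noteq> j \<and> i \<noteq> k \<and> j \<noteq> k \<and>
      w$i = 1 \<and> w$j = -1 \<and> w$k = -1 \<and> (\<forall>l. l \<notin> {i,j,k} \<longrightarrow> w$l = 0))"

definition typeIII :: "real^'r::finite \<Rightarrow> bool" where
  "typeIII w \<longleftrightarrow> (\<exists>i j. i \<noteq> j \<and> w$i = 1 \<and> w$j = -2 \<and> (\<forall>l. l \<notin> {i,j} \<longrightarrow> w$l = 0))"

definition superpotential ::
  "('r::finite \<Rightarrow> nat) \<Rightarrow> (real^'r) set \<Rightarrow> (real^'r \<Rightarrow> real) \<Rightarrow> (real^'r) set \<Rightarrow> (real^'r \<Rightarrow> real) \<Rightarrow> bool" where
  "superpotential d W A C F \<longleftrightarrow>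
     (\<forall>\<xi>. (\<Sum>(a,c)\<in>{(a,c). a \<in> C \<and> c \<in> C \<and> a + c = \<xi>}. Jform d a c * F a * F c)
          = (if \<xi> - dvec d \<in> W then A (\<xi> - dvec d) else 0))"

definition halfW :: "('r::finite \<Rightarrow> nat) \<Rightarrow> (real^'r) set \<Rightarrow> (real^'r) set" where
  "halfW d W = (\<lambda>w. (1/2) *\<^sub>R (dvec d + w)) ` W"

end

theory Submission
  imports Defs
begin

lemma Jform_sym: "Jform d p q = Jform d q p"
  unfolding Jform_def by (simp add: mult.commute)

lemma Jform_add_right: "Jform d x (y + z) = Jform d x y + Jform d x z"
  unfolding Jform_def by (simp add: sum.distrib distrib_left add_divide_distrib algebra_simps)

lemma Jform_diff_right: "Jform d x (y - z) = Jform d x y - Jform d x z"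
  unfolding Jform_def by (simp add: sum_subtractf right_diff_distrib diff_divide_distrib algebra_simps)

lemma Jform_diff_left: "Jform d (y - z) x = Jform d y x - Jform d z x"
  by (metis Jform_sym Jform_diff_right)

lemma Jform_neg:
  fixes v :: "real^'r::finite"
  assumes "\<forall>i. d i > 0" "(\<Sum>i\<in>UNIV. v$i) = 0" "v \<noteq> 0"
  shows "Jform d v v < 0"
proof -
  obtain i where i: "v$i \<noteq> 0" using assms(3) by (metis vec_eq_iff zero_index)
  have "0 < v$i * v$i / real (d i)" proof -
    have "0 < v$i * v$i" using i by (simp add: zero_less_mult_iff) linarith
    moreover have "0 < real (d i)" using assms(1) by simp
    ultimately show ?thesis by simp
  qed
  also have "\<dots> \<le> (\<Sum>j\<in>UNIV. v$j * v$j / real (d j))"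
    by (rule member_le_sum) (auto simp: divide_nonneg_pos assms(1))
  finally show ?thesis unfolding Jform_def using assms(2) by simp
qed

lemma exists_sep_vec:
  fixes U :: "(real^'r::finite) set"
  assumes "finite U" "0 \<notin> U"
  shows "\<exists>v. \<forall>u\<in>U. inner v u \<noteq> 0"
  using assms
proof (induction U rule: finite_induct)
  case empty then show ?case by auto
next
  case (insert u U)
  then obtain v where v: "\<forall>u'\<in>U. inner v u' \<noteq> 0" by auto
  have u0: "u \<noteq> 0" using insert by auto
  show ?case
  proof (cases "inner v u = 0")
    case False then show ?thesis using v by auto
  next
    case True
    let ?S = "insert 0 ((\<lambda>u'. - inner v u' / inner u u') ` U)"
    obtain t :: real where t: "t \<notin> ?S"
      using ex_new_if_finite[OF infinite_UNIV_char_0, of ?S] insert(1) by auto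
    have "\<forall>u'\<in>insert u U. inner (v + t *\<^sub>R u) u' \<noteq> 0"
    proof
      fix u' assume u': "u' \<in> insert u U"
      show "inner (v + t *\<^sub>R u) u' \<noteq> 0"
      proof (cases "u' = u")
        case True then show ?thesis using t u0 \<open>inner v u = 0\<close> by (simp add: inner_add_left)
      next
        case False
        then have "u' \<in> U" using u' by auto
        show ?thesis
        proof
          assume eq: "inner (v + t *\<^sub>R u) u' = 0"
          then have eq2: "inner v u' + t * inner u u' = 0" by (simp add: inner_add_left)
          show False
          proof (cases "inner u u' = 0")
            case True then show False using eq2 v \<open>u' \<in> U\<close> by auto
          next
            case False
            then have "t = - inner v u' / inner u u'" using eq2 by (simp add: field_simps)
            then show False using t \<open>u' \<in> U\<close> by auto
          qed
        qed
      qed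
    qed
    then show ?thesis by blast
  qed
qed

lemma exists_inj_functional:
  fixes C :: "(real^'r::finite) set"
  assumes "finite C"
  shows "\<exists>v. \<forall>x\<in>C. \<forall>y\<in>C. inner v x = inner v y \<longrightarrow> x = y"
proof -
  let ?U = "(\<lambda>(x,y). x - y) ` {(x,y). x \<in> C \<and> y \<in> C \<and> x \<noteq> y}"
  have "finite ?U"
    by (rule finite_imageI, rule finite_subset[of _ "C \<times> C"]) (use assms in auto)
  moreover have "0 \<notin> ?U" by auto
  ultimately obtain v where v: "\<forall>u\<in>?U. inner v u \<noteq> 0" using exists_sep_vec by blast
  have "\<forall>x\<in>C. \<forall>y\<in>C. inner v x = inner v y \<longrightarrow> x = y"
  proof (intro ballI impI)
    fix x y assume "x \<in> C" "y \<in> C" "inner v x = inner v y"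
    show "x = y"
    proof (rule ccontr)
      assume "x \<noteq> y"
      then have "x - y \<in> ?U" using \<open>x \<in> C\<close> \<open>y \<in> C\<close> by auto
      then have "inner v (x - y) \<noteq> 0" using v by blast
      then show False using \<open>inner v x = inner v y\<close> by (simp add: inner_diff_right)
    qed
  qed
  then show ?thesis by blast
qed

lemma lex_max:
  fixes S :: "'a set" and h g :: "'a \<Rightarrow> real"
  assumes "finite S" "S \<noteq> {}"
  shows "\<exists>c\<in>S. \<forall>a\<in>S. h a < h c \<or> (h a = h c \<and> g a \<le> g c)"
proof -
  define M where "M = Max (h ` S)"
  have M: "M \<in> h ` S" "\<forall>a\<in>S. h a \<le> M" using assms unfolding M_def by auto
  define S' where "S' = {c\<in>S. h c = M}"
  have "finite S'" "S' \<noteq> {}" using assms M unfolding S'_def by auto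
  define G where "G = Max (g ` S')"
  have "G \<in> g ` S'" "\<forall>a\<in>S'. g a \<le> G" using \<open>finite S'\<close> \<open>S' \<noteq> {}\<close> unfolding G_def by auto
  then obtain c where c: "c \<in> S'" "g c = G" by auto
  have "\<forall>a\<in>S. h a < h c \<or> (h a = h c \<and> g a \<le> g c)"
    using c M \<open>\<forall>a\<in>S'. g a \<le> G\<close> unfolding S'_def by force
  then show ?thesis using c unfolding S'_def by auto
qed

lemma core:
  fixes d :: "'r::finite \<Rightarrow> nat" and W :: "(real^'r) set" and A :: "real^'r \<Rightarrow> real"
    and C :: "(real^'r) set" and F :: "real^'r \<Rightarrow> real" and h :: "real^'r \<Rightarrow> real"
  assumes lin: "linear h"
    and dpos: "\<forall>i. d i > 0"
    and Cfin: "finite C"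
    and Fnz: "\<forall>c\<in>C. F c \<noteq> 0"
    and sp: "superpotential d W A C F"
    and Chyp: "\<forall>c\<in>C. (\<Sum>i\<in>UNIV. c$i) = (real (ndim d) - 1) / 2"
    and hW: "\<forall>w\<in>W. h ((1/2) *\<^sub>R (dvec d + w)) < lam"
    and k: "k \<in> C" "h k > lam"
  shows "(\<forall>k'\<in>C. h k' > lam \<longrightarrow> k' = k) \<and> is_null d k"
proof -
  define T where "T = (\<lambda>\<xi>. (\<Sum>(a,c)\<in>{(a,c). a \<in> C \<and> c \<in> C \<and> a + c = \<xi>}. Jform d a c * F a * F c))"
  have vanish: "T \<xi> = 0" if "h \<xi> > 2 * lam" for \<xi>
  proof -
    have "\<xi> - dvec d \<notin> W"
    proof
      assume "\<xi> - dvec d \<in> W"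
      then have "h ((1/2) *\<^sub>R (dvec d + (\<xi> - dvec d))) < lam" using hW by blast
      then have "(1/2) * h \<xi> < lam" by (simp add: linear_scale[OF lin])
      then show False using that by simp
    qed
    then show ?thesis using sp unfolding superpotential_def T_def by simp
  qed
  have Tfin: "finite {(a,c). a \<in> C \<and> c \<in> C \<and> a + c = \<xi>}" for \<xi>
    by (rule finite_subset[of _ "C \<times> C"]) (use Cfin in auto)
  obtain v where vinj: "\<forall>x\<in>C. \<forall>y\<in>C. inner v x = inner v y \<longrightarrow> x = y"
    using exists_inj_functional[OF Cfin] by blast
  define g where "g = (\<lambda>x. inner v x)"
  have ginj: "\<And>x y. x \<in> C \<Longrightarrow> y \<in> C \<Longrightarrow> g x = g y \<Longrightarrow> x = y" using vinj g_def by blast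
  have hadd: "h (a + b) = h a + h b" for a b by (simp add: linear_add[OF lin])
  have gadd: "g (a + b) = g a + g b" for a b by (simp add: g_def inner_add_right)
  define le where "le = (\<lambda>a c. h a < h c \<or> (h a = h c \<and> g a \<le> g c))"
  have top: "a = c \<and> b = c" if "a \<in> C" "b \<in> C" "c \<in> C" "le a c" "le b c" "a + b = c + c" for a b c
  proof -
    have "h a + h b = h c + h c" "g a + g b = g c + g c"
      using that(6) hadd gadd by metis+
    then have "h a = h c \<and> h b = h c \<and> g a = g c \<and> g b = g c"
      using that(4,5) unfolding le_def by linarith
    then show ?thesis using ginj that(1-3) by blast
  qed
  have Jsym: "Jform d a b = Jform d b a" for a b by (rule Jform_sym)
  obtain c1 where c1: "c1 \<in> C" "\<forall>a\<in>C. le a c1"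
    using lex_max[OF Cfin, of h g] k(1) unfolding le_def by blast
  have hc1: "h c1 > lam" using c1 k unfolding le_def by force
  have S1: "{(a,b). a \<in> C \<and> b \<in> C \<and> a + b = c1 + c1} = {(c1,c1)}"
    using top c1 by auto
  have "T (c1 + c1) = Jform d c1 c1 * F c1 * F c1" unfolding T_def S1 by simp
  moreover have "T (c1 + c1) = 0" by (rule vanish) (use hc1 hc1 hadd[of c1 c1] in linarith)
  ultimately have J11: "Jform d c1 c1 = 0" using Fnz c1(1) by simp
  have allc1: "k' = c1" if "k' \<in> C" "h k' > lam" for k'
  proof (rule ccontr)
    assume ne: "k' \<noteq> c1"
    have "finite (C - {c1})" "C - {c1} \<noteq> {}" using Cfin that ne by auto
    then obtain c2 where c2: "c2 \<in> C - {c1}" "\<forall>a\<in>C - {c1}. le a c2"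
      using lex_max[of "C - {c1}" h g] unfolding le_def by blast
    have c2C: "c2 \<in> C" and c21: "c2 \<noteq> c1" using c2 by auto
    have "le k' c2" using c2 that ne by auto
    then have hc2: "h c2 > lam" using that unfolding le_def by linarith
    have lec2: "le c2 c1" using c1 c2C by auto
    have gneq: "g c2 \<noteq> g c1" using ginj c2C c1(1) c21 by blast
    have S2: "{(a,b). a \<in> C \<and> b \<in> C \<and> a + b = c1 + c2} = {(c1,c2),(c2,c1)}"
    proof (intro equalityI subsetI)
      fix p assume p: "p \<in> {(a,b). a \<in> C \<and> b \<in> C \<and> a + b = c1 + c2}"
      obtain a b where ab: "p = (a,b)" "a \<in> C" "b \<in> C" "a + b = c1 + c2" using p by auto
      show "p \<in> {(c1,c2),(c2,c1)}"
      proof (cases "a = c1 \<or> b = c1")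
        case True
        then show ?thesis using ab by (auto simp: add.commute)
      next
        case False
        then have "le a c2" "le b c2" using c2 ab by auto
        moreover have "h a + h b = h c1 + h c2" "g a + g b = g c1 + g c2"
          using ab(4) hadd gadd by metis+
        ultimately show ?thesis using lec2 gneq unfolding le_def by linarith
      qed
    next
      fix p assume "p \<in> {(c1,c2),(c2,c1)}"
      then show "p \<in> {(a,b). a \<in> C \<and> b \<in> C \<and> a + b = c1 + c2}"
        using c1(1) c2C by (auto simp: add.commute)
    qed
    have "T (c1 + c2) = Jform d c1 c2 * F c1 * F c2 + Jform d c2 c1 * F c2 * F c1"
      unfolding T_def S2 using c21 by simp
    also have "\<dots> = 2 * (Jform d c1 c2 * F c1 * F c2)" using Jsym[of c2 c1] by simp
    finally have "T (c1 + c2) = 2 * (Jform d c1 c2 * F c1 * F c2)" .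
    moreover have "T (c1 + c2) = 0" by (rule vanish) (use hc1 hc2 hadd[of c1 c2] in linarith)
    ultimately have J12: "Jform d c1 c2 = 0" using Fnz c1(1) c2C by simp
    define b0 where "b0 = c2 + c2 - c1"
    have Jb0: "Jform d c1 b0 = 0" unfolding b0_def Jform_diff_right Jform_add_right J11 J12 by simp
    define S3 where "S3 = {(a,b). a \<in> C \<and> b \<in> C \<and> a + b = c2 + c2}"
    have S3sub: "S3 - {(c2,c2)} \<subseteq> {(c1,b0),(b0,c1)}"
    proof
      fix p assume p: "p \<in> S3 - {(c2,c2)}"
      obtain a b where ab: "p = (a,b)" "a \<in> C" "b \<in> C" "a + b = c2 + c2" using p unfolding S3_def by auto
      show "p \<in> {(c1,b0),(b0,c1)}"
      proof (cases "a = c1 \<or> b = c1")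
        case True
        then show ?thesis using ab unfolding b0_def by (auto simp: algebra_simps)
      next
        case False
        then have "le a c2" "le b c2" using c2 ab by auto
        then have "a = c2 \<and> b = c2" using top[of a b c2] ab c2C by blast
        then show ?thesis using p ab by auto
      qed
    qed
    have c22: "(c2,c2) \<in> S3" unfolding S3_def using c2C by auto
    have "T (c2 + c2) = Jform d c2 c2 * F c2 * F c2 + (\<Sum>(a,b)\<in>S3 - {(c2,c2)}. Jform d a b * F a * F b)"
      unfolding T_def S3_def[symmetric] using sum.remove[OF _ c22, of "\<lambda>(a,b). Jform d a b * F a * F b"] Tfin
      unfolding S3_def by simp
    also have "(\<Sum>(a,b)\<in>S3 - {(c2,c2)}. Jform d a b * F a * F b) = 0"
    proof (rule sum.neutral, rule ballI)
      fix p assume "p \<in> S3 - {(c2,c2)}"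
      then have "p = (c1,b0) \<or> p = (b0,c1)" using S3sub by auto
      then show "(case p of (a,b) \<Rightarrow> Jform d a b * F a * F b) = 0"
        using Jb0 Jsym[of b0 c1] by auto
    qed
    finally have "T (c2 + c2) = Jform d c2 c2 * F c2 * F c2" by simp
    moreover have "T (c2 + c2) = 0" by (rule vanish) (use hc2 hc2 hadd[of c2 c2] in linarith)
    ultimately have J22: "Jform d c2 c2 = 0" using Fnz c2C by simp
    have "Jform d (c1 - c2) (c1 - c2) = 0"
      using J11 J12 J22 Jsym[of c2 c1] by (simp add: Jform_diff_right Jform_diff_left)
    moreover have "(\<Sum>i\<in>UNIV. (c1 - c2)$i) = 0"
      proof -
      have "(\<Sum>i\<in>UNIV. c1$i) = (\<Sum>i\<in>UNIV. c2$i)" using Chyp c1(1) c2C by (metis (no_types, lifting))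
      then show ?thesis by (simp add: sum_subtractf)
    qed
    moreover have "c1 - c2 \<noteq> 0" using c21 by simp
    ultimately show False using Jform_neg[OF dpos] by fastforce
  qed
  have "k = c1" using allc1 k by blast
  then show ?thesis using allc1 J11 unfolding is_null_def by auto
qed

theorem proposition3p3:
  fixes d :: "'r::finite \<Rightarrow> nat"
    and W :: "(real^'r) set" and A :: "real^'r \<Rightarrow> real"
    and C :: "(real^'r) set" and F :: "real^'r \<Rightarrow> real"
  assumes r2: "CARD('r) \<ge> 2"
    and dpos: "\<forall>i. d i > 0"
    and Wfin: "finite W"
    and Wtypes: "\<forall>w\<in>W. typeI w \<or> typeII w \<or> typeIII w"
    and Asign: "\<forall>w\<in>W. (typeI w \<longrightarrow> A w > 0) \<and> (\<not> typeI w \<longrightarrow> A w < 0)"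
    and Wdim: "aff_dim (convex hull W) = int CARD('r) - 1"
    and Cfin: "finite C"
    and Fnz: "\<forall>c\<in>C. F c \<noteq> 0"
    and sp: "superpotential d W A C F"
    and Chyp: "\<forall>c\<in>C. (\<Sum>i\<in>UNIV. c$i) = (real (ndim d) - 1) / 2"
  shows "(\<forall>(h :: real^'r \<Rightarrow> real) (lam::real). linear h \<and> convex hull (halfW d W) \<subseteq> {x. h x < lam} \<longrightarrow>
            card {c\<in>C. h c > lam} \<le> 1 \<and>
            (\<forall>c\<in>C. h c > lam \<longrightarrow> is_null d c \<and> c extreme_point_of (convex hull C)))
       \<and> (\<forall>c\<in>C. c \<notin> convex hull (halfW d W) \<longrightarrow> is_null d c \<and> c extreme_point_of (convex hull C))"
proof -
  have P1: "card {c\<in>C. h c > lam} \<le> 1 \<and>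
            (\<forall>c\<in>C. h c > lam \<longrightarrow> is_null d c \<and> c extreme_point_of (convex hull C))"
    if lin: "linear h" and hull: "convex hull (halfW d W) \<subseteq> {x. h x < lam}" for h :: "real^'r \<Rightarrow> real" and lam :: real
  proof -
    have hs: "halfW d W \<subseteq> convex hull (halfW d W)" by (rule hull_subset)
    have hW: "\<forall>w\<in>W. h ((1/2) *\<^sub>R (dvec d + w)) < lam"
    proof
      fix w assume "w \<in> W"
      then have "(1/2) *\<^sub>R (dvec d + w) \<in> halfW d W" unfolding halfW_def by (rule imageI)
      then have "(1/2) *\<^sub>R (dvec d + w) \<in> {x. h x < lam}" using hs hull by blast
      then show "h ((1/2) *\<^sub>R (dvec d + w)) < lam" by simp
    qed
    note cr = core[OF lin dpos Cfin Fnz sp Chyp hW]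
    have "\<forall>a1\<in>{c\<in>C. h c > lam}. \<forall>a2\<in>{c\<in>C. h c > lam}. a1 = a2"
    proof (intro ballI)
      fix a1 a2 assume "a1 \<in> {c\<in>C. h c > lam}" "a2 \<in> {c\<in>C. h c > lam}"
      then show "a1 = a2" using cr[of a1] by blast
    qed
    moreover have "finite {c\<in>C. h c > lam}" using Cfin by simp
    ultimately have card: "card {c\<in>C. h c > lam} \<le> 1"
      using card_le_Suc0_iff_eq[of "{c\<in>C. h c > lam}"] by simp
    have cvx: "convex {x. h x \<le> lam}"
    proof (rule convexI)
      fix x y :: "real^'r" and u v :: real
      assume xy: "x \<in> {x. h x \<le> lam}" "y \<in> {x. h x \<le> lam}" and uv: "0 \<le> u" "0 \<le> v" "u + v = 1"
      have "h x \<le> lam" "h y \<le> lam" using xy by auto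
      moreover have "h (u *\<^sub>R x + v *\<^sub>R y) = u * h x + v * h y"
        by (simp add: linear_add[OF lin] linear_scale[OF lin])
      moreover have "u * h x \<le> u * lam" "v * h y \<le> v * lam"
        using calculation uv by (simp_all add: mult_left_mono)
      ultimately have "h (u *\<^sub>R x + v *\<^sub>R y) \<le> (u + v) * lam" by (simp add: distrib_right)
      then show "u *\<^sub>R x + v *\<^sub>R y \<in> {x. h x \<le> lam}" using uv by simp
    qed
    have ext: "is_null d c \<and> c extreme_point_of (convex hull C)" if c: "c \<in> C" "h c > lam" for c
    proof -
      have "C - {c} \<subseteq> {x. h x \<le> lam}"
      proof
        fix x assume x: "x \<in> C - {c}"
        show "x \<in> {x. h x \<le> lam}"
        proof (rule ccontr)
          assume "x \<notin> {x. h x \<le> lam}"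
          then have "h x > lam" by simp
          then have "x = c" using cr[OF c] x by blast
          then show False using x by simp
        qed
      qed
      then have "convex hull (C - {c}) \<subseteq> {x. h x \<le> lam}" using cvx by (simp add: hull_minimal)
      then have "c \<notin> convex hull (C - {c})" using c by auto
      then have "c extreme_point_of (convex hull (insert c (C - {c})))"
        using extreme_point_of_convex_hull_insert[of "C - {c}" c] Cfin by auto
      moreover have "insert c (C - {c}) = C" using c by auto
      ultimately show ?thesis using cr[OF c] by simp
    qed
    show ?thesis using card ext by blast
  qed
  have P2: "is_null d c \<and> c extreme_point_of (convex hull C)"
    if c: "c \<in> C" "c \<notin> convex hull (halfW d W)" for c
  proof -
    have "finite (halfW d W)" unfolding halfW_def using Wfin by simp
    then have "compact (convex hull (halfW d W))" by (rule finite_imp_compact_convex_hull)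
    then obtain a b where ab: "inner a c < b" "\<forall>x\<in>convex hull (halfW d W). inner a x > b"
      using separating_hyperplane_closed_point[OF convex_convex_hull compact_imp_closed c(2)] by blast
    define h where "h = (\<lambda>x::real^'r. - inner a x)"
    have lin: "linear h" unfolding h_def
      by (rule linearI) (simp_all add: inner_add_right)
    have "convex hull (halfW d W) \<subseteq> {x. h x < - b}" using ab(2) unfolding h_def by auto
    from P1[OF lin this] have "\<forall>c\<in>C. h c > - b \<longrightarrow> is_null d c \<and> c extreme_point_of (convex hull C)" by blast
    moreover have "h c > - b" using ab(1) unfolding h_def by simp
    ultimately show ?thesis using c(1) by blast
  qed
  have Q1: "\<forall>(h :: real^'r \<Rightarrow> real) (lam::real). linear h \<and> convex hull (halfW d W) \<subseteq> {x. h x < lam} \<longrightarrow>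
            card {c\<in>C. h c > lam} \<le> 1 \<and>
            (\<forall>c\<in>C. h c > lam \<longrightarrow> is_null d c \<and> c extreme_point_of (convex hull C))"
  proof (intro allI impI)
    fix h :: "real^'r \<Rightarrow> real" and lam :: real
    assume H: "linear h \<and> convex hull (halfW d W) \<subseteq> {x. h x < lam}"
    show "card {c\<in>C. h c > lam} \<le> 1 \<and>
            (\<forall>c\<in>C. h c > lam \<longrightarrow> is_null d c \<and> c extreme_point_of (convex hull C))"
      using P1[OF conjunct1[OF H] conjunct2[OF H]] .
  qed
  have Q2: "\<forall>c\<in>C. c \<notin> convex hull (halfW d W) \<longrightarrow> is_null d c \<and> c extreme_point_of (convex hull C)"
    using P2 by blast
  show ?thesis using Q1 Q2 by (rule conjI)
qed

end
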